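(* Let $A$ be a C$^*$-algebra with cancellation. (1) Let $p$ be a projection in $A$ and let $\{g_n\}_{n=1}^N$ be an increasing sequence in $K_0(A)^+$ with $g_N=[p]_0$. Then there exists an increasing sequence $\{p_n\}_{n=1}^N$ of projections in $A$ such that $[p_n]_0=g_n$ for $1\leq n\leq N$ and $p_N=p$. (2) Let $\{p_n\}_{n=1}^N$ be an increasing sequence of projections in $A$ and $\{g_m\}_{m=1}^M$ an increasing sequence in $K_0(A)^+$ such that there is an increasing sequence $\{m_n\}_{n=1}^N$ of indices with $g_{m_n}=[p_n]_0$ for all $1\leq n\leq N$ and $m_N=M$. Then there exists an increasing sequence $\{q_m\}_{m=1}^M$ of projections in $A$ such that $[q_m]_0=g_m$ for all $1\leq m\leq M$ and $p_n=q_{m_n}$ for all $1\leq n\leq N$.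
   Context: For a C$^*$-algebra $A$, $K_0(A)$ is the usual $K_0$-group with positive cone $K_0(A)^+=\{[p]_0 : p \text{ a projection in } M_n(A),\ n\geq1\}$, and $g\leq h$ means $h-g\in K_0(A)^+$. For projections, $p\leq q$ means $pq=qp=p$; increasing sequences are taken with respect to these orders. $A$ has cancellation if for all projections $p,q$ in $\bigcup_{n\geq1}M_n(A)$, $[p]_0=[q]_0$ if and only if $p$ and $q$ are Murray--von Neumann equivalent. *)

theory Defs
  imports Complex_Main
begin

class has_adj =
  fixes adj :: "'a \<Rightarrow> 'a"

text \<open>The complex scalar multiplication is
  an extra operation compatible with the real one.\<close>
class cstar_algebra = real_normed_algebra + banach + has_adj +
  fixes scaleC :: "complex \<Rightarrow> 'a \<Rightarrow> 'a"
  assumes scaleC_of_real: "scaleC (complex_of_real r) x = scaleR r x"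
    and scaleC_add_right: "scaleC c (x + y) = scaleC c x + scaleC c y"
    and scaleC_add_left: "scaleC (c + d) x = scaleC c x + scaleC d x"
    and scaleC_scaleC: "scaleC c (scaleC d x) = scaleC (c * d) x"
    and scaleC_one: "scaleC 1 x = x"
    and scaleC_mult_left: "scaleC c x * y = scaleC c (x * y)"
    and scaleC_mult_right: "x * scaleC c y = scaleC c (x * y)"
    and norm_scaleC: "norm (scaleC c x) = cmod c * norm x"
    and adj_add: "adj (x + y) = adj x + adj y"
    and adj_scaleC: "adj (scaleC c x) = scaleC (cnj c) (adj x)"
    and adj_mult: "adj (x * y) = adj y * adj x"
    and adj_adj: "adj (adj x) = x"
    and cstar_identity: "norm (adj x * x) = (norm x)^2"

section \<open>Forced unitization\<close>

datatype 'a unitz = Uz 'a complex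

instantiation unitz :: (cstar_algebra) comm_monoid_add
begin
definition zero_unitz :: "'a unitz" where "zero_unitz = Uz 0 0"
fun plus_unitz :: "'a unitz \<Rightarrow> 'a unitz \<Rightarrow> 'a unitz" where
  "plus_unitz (Uz a x) (Uz b y) = Uz (a + b) (x + y)"
instance
proof
  fix a b c :: "'a unitz"
  show "a + b + c = a + (b + c)"
    by (cases a; cases b; cases c) (simp add: algebra_simps)
  show "a + b = b + a"
    by (cases a; cases b) (simp add: algebra_simps)
  show "0 + a = a"
    by (cases a) (simp add: zero_unitz_def)
qed
end

instantiation unitz :: (cstar_algebra) times
begin
fun times_unitz :: "'a unitz \<Rightarrow> 'a unitz \<Rightarrow> 'a unitz" where
  "times_unitz (Uz a x) (Uz b y) = Uz (a * b + scaleC x b + scaleC y a) (x * y)"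
instance ..
end

instantiation unitz :: (cstar_algebra) has_adj
begin
fun adj_unitz :: "'a unitz \<Rightarrow> 'a unitz" where
  "adj_unitz (Uz a x) = Uz (adj a) (cnj x)"
instance ..
end

section \<open>Matrices over an algebra: M_infinity = union of the M_n, upper left corner embedding\<close>

type_synonym 'a mat = "nat \<Rightarrow> nat \<Rightarrow> 'a"

definition in_Mn :: "nat \<Rightarrow> 'a::zero mat \<Rightarrow> bool" where
  "in_Mn n M \<longleftrightarrow> (\<forall>i j. (n \<le> i \<or> n \<le> j) \<longrightarrow> M i j = 0)"

definition fin_mat :: "'a::zero mat \<Rightarrow> bool" where
  "fin_mat M \<longleftrightarrow> (\<exists>n. in_Mn n M)"

definition mmult :: "'a::{comm_monoid_add,times} mat \<Rightarrow> 'a mat \<Rightarrow> 'a mat" where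
  "mmult M N = (\<lambda>i j. \<Sum>k\<in>{k. M i k \<noteq> 0}. M i k * N k j)"

definition madj :: "'a::has_adj mat \<Rightarrow> 'a mat" where
  "madj M = (\<lambda>i j. adj (M j i))"

definition is_proj :: "'a::{comm_monoid_add,times,has_adj} mat \<Rightarrow> bool" where
  "is_proj P \<longleftrightarrow> fin_mat P \<and> madj P = P \<and> mmult P P = P"

definition mvn :: "'a::{comm_monoid_add,times,has_adj} mat \<Rightarrow> 'a mat \<Rightarrow> bool" where
  "mvn P Q \<longleftrightarrow> (\<exists>V. fin_mat V \<and> mmult (madj V) V = P \<and> mmult V (madj V) = Q)"

definition dsum :: "nat \<Rightarrow> 'a::zero mat \<Rightarrow> 'a mat \<Rightarrow> 'a mat" where
  "dsum n P Q = (\<lambda>i j. if i < n \<and> j < n then P i j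
                        else if n \<le> i \<and> n \<le> j then Q (i - n) (j - n) else 0)"

definition lift_uz :: "'a::cstar_algebra mat \<Rightarrow> 'a unitz mat" where
  "lift_uz M = (\<lambda>i j. Uz (M i j) 0)"

definition unit_uz :: "nat \<Rightarrow> 'a::cstar_algebra unitz mat" where
  "unit_uz k = (\<lambda>i j. if i = j \<and> i < k then Uz 0 1 else 0)"

text \<open>Equality of K_0-classes: [P]_0 = [Q]_0 in K_0(A) (a subgroup of K_0 of the
  unitization) iff P + 1_k and Q + 1_k are Murray--von Neumann equivalent over the
  unitization for some k.\<close>
definition k0_eq :: "'a::cstar_algebra mat \<Rightarrow> 'a mat \<Rightarrow> bool" where
  "k0_eq P Q \<longleftrightarrow> (\<exists>n k. in_Mn n P \<and> in_Mn n Q \<and>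
      mvn (dsum n (lift_uz P) (unit_uz k)) (dsum n (lift_uz Q) (unit_uz k)))"

text \<open>The class [P]_0, represented as a set of projections.\<close>
definition k0cls :: "'a::cstar_algebra mat \<Rightarrow> 'a mat set" where
  "k0cls P = {Q. is_proj Q \<and> k0_eq P Q}"

definition K0pos :: "'a::cstar_algebra mat set set" where
  "K0pos = k0cls ` {P. is_proj P}"

text \<open>Order on K_0(A)^+: g \<le> h iff h - g \<in> K_0(A)^+, i.e. h = g + [r]_0 for some
  projection r, where [p]_0 + [r]_0 = [diag(p,r)]_0.\<close>
definition k0_le :: "'a::cstar_algebra mat set \<Rightarrow> 'a mat set \<Rightarrow> bool" where
  "k0_le g h \<longleftrightarrow> (\<exists>P R n. is_proj P \<and> is_proj R \<and> in_Mn n P \<and>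
      g = k0cls P \<and> h = k0cls (dsum n P R))"

definition has_cancellation :: "'a::cstar_algebra itself \<Rightarrow> bool" where
  "has_cancellation _ \<longleftrightarrow>
     (\<forall>P Q :: 'a mat. is_proj P \<longrightarrow> is_proj Q \<longrightarrow> (k0_eq P Q \<longleftrightarrow> mvn P Q))"

definition elem_mat :: "'a::zero \<Rightarrow> 'a mat" where
  "elem_mat a = (\<lambda>i j. if i = 0 \<and> j = 0 then a else 0)"

definition is_aproj :: "'a::cstar_algebra \<Rightarrow> bool" where
  "is_aproj p \<longleftrightarrow> adj p = p \<and> p * p = p"

definition proj_le :: "'a::cstar_algebra \<Rightarrow> 'a \<Rightarrow> bool" where
  "proj_le p q \<longleftrightarrow> p * q = p \<and> q * p = p"

end

theory Submission
  imports Defs "HOL-Library.Function_Algebras"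
begin


lemma sum_split_add: "(\<Sum>k<n+m. f k) = (\<Sum>k<n. f k) + (\<Sum>l<m. f (n+l))"
  for f :: "nat \<Rightarrow> 'b::comm_monoid_add"
  by (induction m) (simp_all add: add.assoc)

class adjsr = semiring_0 + has_adj +
  assumes sr_adj_add: "adj (x + y) = adj x + adj y"
  and sr_adj_mult: "adj (x * y) = adj y * adj x"
  and sr_adj_adj: "adj (adj x) = x"
  and sr_adj_zero: "adj 0 = 0"

lemma (in cstar_algebra) adj_zero_cs: "adj 0 = 0"
  by (metis add_cancel_right_right adj_add add_0)

subclass (in cstar_algebra) adjsr
  by unfold_locales (simp_all add: adj_add adj_mult adj_adj adj_zero_cs)

lemma scaleC_zero_left [simp]: "scaleC 0 (x::'a::cstar_algebra) = 0"
  using scaleC_of_real[of 0 x] by simp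

lemma scaleC_zero_right [simp]: "scaleC c (0::'a::cstar_algebra) = 0"
  by (metis add_cancel_right_right add_0 scaleC_add_right)

lemma scaleC_minus_right: "scaleC c (- x::'a::cstar_algebra) = - scaleC c x"
  by (metis add.right_inverse add_eq_0_iff scaleC_add_right scaleC_zero_right)

instance unitz :: (cstar_algebra) semiring_0
proof
  fix a b c :: "'a unitz"
  show "a * b * c = a * (b * c)"
    by (cases a; cases b; cases c)
       (simp add: algebra_simps scaleC_add_right scaleC_mult_left scaleC_mult_right scaleC_scaleC mult.commute)
  show "(a + b) * c = a * c + b * c"
    by (cases a; cases b; cases c)
       (simp add: algebra_simps scaleC_add_right scaleC_add_left)
  show "a * (b + c) = a * b + a * c"
    by (cases a; cases b; cases c)
       (simp add: algebra_simps scaleC_add_right scaleC_add_left)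
  show "0 * a = 0"
    by (cases a) (simp add: zero_unitz_def)
  show "a * 0 = 0"
    by (cases a) (simp add: zero_unitz_def)
qed

instance unitz :: (cstar_algebra) adjsr
proof
  fix x y :: "'a unitz"
  show "adj (x + y) = adj x + adj y"
    by (cases x; cases y) (simp add: adj_add)
  show "adj (x * y) = adj y * adj x"
    by (cases x; cases y) (simp add: adj_add adj_mult adj_scaleC algebra_simps)
  show "adj (adj x) = x"
    by (cases x) (simp add: adj_adj)
  show "adj 0 = (0::'a unitz)"
    by (simp add: zero_unitz_def adj_zero_cs)
qed



definition mm :: "nat \<Rightarrow> 'a::semiring_0 mat \<Rightarrow> 'a mat \<Rightarrow> 'a mat" where
  "mm N A B = (\<lambda>i j. \<Sum>k<N. A i k * B k j)"

definition emat :: "nat \<Rightarrow> nat \<Rightarrow> 'a::zero \<Rightarrow> 'a mat" where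
  "emat i j a = (\<lambda>r s. if r = i \<and> s = j then a else 0)"

lemma mm_apply: "mm N A B i j = (\<Sum>k<N. A i k * B k j)"
  by (simp add: mm_def)

lemma mm_add_left: "mm N (A + B) C = mm N A C + mm N B C"
  by (simp add: mm_def fun_eq_iff distrib_right sum.distrib)

lemma mm_add_right: "mm N A (B + C) = mm N A B + mm N A C"
  by (simp add: mm_def fun_eq_iff distrib_left sum.distrib)

lemma mm_zero_left [simp]: "mm N 0 B = 0"
  by (simp add: mm_def fun_eq_iff)

lemma mm_zero_right [simp]: "mm N A 0 = 0"
  by (simp add: mm_def fun_eq_iff)

lemma mm_assoc: "mm N (mm N A B) C = mm N A (mm N B C)"
proof -
  have "\<And>i j. (\<Sum>l<N. (\<Sum>k<N. A i k * B k l) * C l j) = (\<Sum>k<N. A i k * (\<Sum>l<N. B k l * C l j))"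
    by (simp add: sum_distrib_left sum_distrib_right mult.assoc) (rule sum.swap)
  then show ?thesis by (simp add: mm_def fun_eq_iff)
qed

lemma emat_zero [simp]: "emat i j 0 = (0::'a::zero mat)"
  by (simp add: emat_def fun_eq_iff)

lemma emat_add: "emat i j a + emat i j b = emat i j (a + b::'a::comm_monoid_add)"
  by (simp add: emat_def fun_eq_iff)

lemma sum_delta_lt: "(\<Sum>k<(N::nat). if k = j then g k else 0) = (if j < N then g j else (0::'a::comm_monoid_add))"
  by (simp add: sum.delta')

lemma mm_emat_left: "mm N (emat i j a) B = (\<lambda>r s. if r = i \<and> j < N then a * B j s else 0)"
proof (intro ext)
  fix r s show "mm N (emat i j a) B r s = (if r = i \<and> j < N then a * B j s else 0)"
    by (cases "r = i") (simp_all add: mm_def emat_def sum_delta_lt if_distrib[where f="\<lambda>x. x * _"] cong: if_cong)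
qed

lemma mm_emat_right: "mm N A (emat i j a) = (\<lambda>r s. if s = j \<and> i < N then A r i * a else 0)"
proof (intro ext)
  fix r s show "mm N A (emat i j a) r s = (if s = j \<and> i < N then A r i * a else 0)"
    by (cases "s = j") (simp_all add: mm_def emat_def sum_delta_lt if_distrib[where f="\<lambda>x. _ * x"] cong: if_cong)
qed

lemma mm_emat_emat: "mm N (emat i j a) (emat k l b) = (if j = k \<and> j < N then emat i l (a * b) else 0)"
  unfolding mm_emat_left by (auto simp add: emat_def fun_eq_iff)

lemma mm_emat_zrow: "(\<And>s. B j s = 0) \<Longrightarrow> mm N (emat i j a) B = 0"
  by (simp add: mm_emat_left fun_eq_iff)

lemma mm_emat_zcol: "(\<And>r. A r i = 0) \<Longrightarrow> mm N A (emat i j a) = 0"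
  by (simp add: mm_emat_right fun_eq_iff)

lemma in_Mn_mono: "in_Mn n A \<Longrightarrow> n \<le> m \<Longrightarrow> in_Mn m A"
  by (auto simp: in_Mn_def)

lemma in_Mn_mm: "in_Mn n A \<Longrightarrow> in_Mn n B \<Longrightarrow> in_Mn n (mm N A B)"
  by (auto simp: in_Mn_def mm_def)

lemma in_Mn_add: "in_Mn n A \<Longrightarrow> in_Mn n B \<Longrightarrow> in_Mn n (A + B::'a::comm_monoid_add mat)"
  by (auto simp: in_Mn_def)

lemma in_Mn_emat: "i < n \<Longrightarrow> j < n \<Longrightarrow> in_Mn n (emat i j a)"
  by (auto simp: in_Mn_def emat_def)

lemma in_Mn_zero [simp]: "in_Mn n 0"
  by (auto simp: in_Mn_def)

lemma mmult_mm: assumes "in_Mn N A" shows "mmult A B = mm N A B"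
proof -
  have "(\<Sum>k\<in>{k. A i k \<noteq> 0}. A i k * B k j) = (\<Sum>k<N. A i k * B k j)" for i j
  proof (rule sum.mono_neutral_left)
    show "finite {..<N}" by simp
    show "{k. A i k \<noteq> 0} \<subseteq> {..<N}" using assms by (auto simp: in_Mn_def) (meson not_less)
    show "\<forall>k\<in>{..<N} - {k. A i k \<noteq> 0}. A i k * B k j = 0" by auto
  qed
  then show ?thesis by (simp add: mmult_def mm_def fun_eq_iff)
qed

lemma fin_mat_in_Mn: "fin_mat A \<Longrightarrow> \<exists>n. in_Mn n A"
  by (simp add: fin_mat_def)

lemma fin_mat_iff: "fin_mat A \<longleftrightarrow> (\<exists>n. in_Mn n A)"
  by (simp add: fin_mat_def)

lemma in_Mn_fin: "in_Mn n A \<Longrightarrow> fin_mat A"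
  by (auto simp: fin_mat_def)

lemma fin_common: "fin_mat A \<Longrightarrow> fin_mat B \<Longrightarrow> \<exists>n. in_Mn n A \<and> in_Mn n B"
  by (metis fin_mat_def in_Mn_mono max.cobounded1 max.cobounded2)

lemma madj_apply: "madj A i j = adj (A j i)"
  by (simp add: madj_def)

lemma madj_madj [simp]: "madj (madj (A::'a::adjsr mat)) = A"
  by (simp add: madj_def sr_adj_adj)

lemma madj_add: "madj (A + B :: 'a::adjsr mat) = madj A + madj B"
  by (simp add: madj_def fun_eq_iff sr_adj_add)

lemma madj_zero [simp]: "madj (0 :: 'a::adjsr mat) = 0"
  by (simp add: madj_def fun_eq_iff sr_adj_zero)

lemma adj_sum: "adj (\<Sum>k\<in>S. f k) = (\<Sum>k\<in>S. adj (f k :: 'a::adjsr))"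
  by (induction S rule: infinite_finite_induct) (simp_all add: sr_adj_zero sr_adj_add)

lemma madj_mm: "madj (mm N A B :: 'a::adjsr mat) = mm N (madj B) (madj A)"
  by (simp add: madj_def mm_def fun_eq_iff adj_sum sr_adj_mult)

lemma madj_emat: "madj (emat i j (a::'a::adjsr)) = emat j i (adj a)"
  by (auto simp add: madj_def emat_def fun_eq_iff sr_adj_zero)

lemma in_Mn_madj: "in_Mn n (A::'a::adjsr mat) \<Longrightarrow> in_Mn n (madj A)"
  by (auto simp: in_Mn_def madj_def sr_adj_zero)

lemma fin_madj: "fin_mat (A::'a::adjsr mat) \<Longrightarrow> fin_mat (madj A)"
  using in_Mn_madj fin_mat_def by blast



lemma mm_resize: "in_Mn n A \<Longrightarrow> in_Mn m A \<Longrightarrow> mm n A B = mm m A B"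
  by (metis mmult_mm)

lemma in_Mn_mm2: "in_Mn m A \<Longrightarrow> in_Mn m B \<Longrightarrow> in_Mn m (mm N (mm N A X) B)"
  by (auto simp: in_Mn_def mm_def)

lemma in_Mn_mm_rows: "in_Mn m A \<Longrightarrow> (\<And>i. i \<ge> m \<Longrightarrow> mm N A X i j = 0)"
  by (auto simp: in_Mn_def mm_def)

lemma mvn_mmI: "in_Mn n V \<Longrightarrow> mm n (madj V) V = P \<Longrightarrow> mm n V (madj V) = Q \<Longrightarrow> mvn P (Q::'a::adjsr mat)"
  unfolding mvn_def by (metis in_Mn_fin in_Mn_madj mmult_mm)

lemma mvn_mmE:
  assumes "mvn P (Q::'a::adjsr mat)"
  obtains V n where "in_Mn n V" "mm n (madj V) V = P" "mm n V (madj V) = Q"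
  using assms unfolding mvn_def by (metis fin_mat_def in_Mn_madj mmult_mm)

lemma is_proj_mm: "is_proj (P::'a::adjsr mat) \<Longrightarrow> in_Mn n P \<Longrightarrow> mm n P P = P"
  unfolding is_proj_def by (metis mmult_mm)

lemma is_proj_adj: "is_proj (P::'a::adjsr mat) \<Longrightarrow> madj P = P"
  unfolding is_proj_def by simp

lemma is_projI: "in_Mn n P \<Longrightarrow> madj P = P \<Longrightarrow> mm n P P = P \<Longrightarrow> is_proj (P::'a::adjsr mat)"
  unfolding is_proj_def by (metis in_Mn_fin mmult_mm)

lemma is_proj_fin: "is_proj P \<Longrightarrow> \<exists>n. in_Mn n P"
  unfolding is_proj_def fin_mat_def by simp

lemma is_proj_zero [simp]: "is_proj (0::'a::adjsr mat)"
  by (rule is_projI[of 0]) simp_all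

lemma mvn_refl: "is_proj (P::'a::adjsr mat) \<Longrightarrow> mvn P P"
  by (metis is_proj_def mvn_def)

lemma mvn_sym: "mvn P (Q::'a::adjsr mat) \<Longrightarrow> mvn Q P"
  unfolding mvn_def by (metis fin_madj madj_madj)

lemma mvn_trans:
  assumes P: "is_proj (P::'a::adjsr mat)" and R: "is_proj R" and PQ: "mvn P Q" and QR: "mvn Q R"
  shows "mvn P R"
proof -
  obtain V n1 where V: "in_Mn n1 V" "mm n1 (madj V) V = P" "mm n1 V (madj V) = Q" using PQ by (rule mvn_mmE)
  obtain W n2 where W: "in_Mn n2 W" "mm n2 (madj W) W = Q" "mm n2 W (madj W) = R" using QR by (rule mvn_mmE)
  obtain n3 where n3: "in_Mn n3 P" using P is_proj_fin by blast
  obtain n4 where n4: "in_Mn n4 R" using R is_proj_fin by blast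
  define n where "n = max (max n1 n2) (max n3 n4)"
  have Vn: "in_Mn n V" "in_Mn n W" "in_Mn n P" "in_Mn n R"
    using V W n3 n4 by (auto simp: n_def intro: in_Mn_mono)
  have V': "mm n (madj V) V = P" "mm n V (madj V) = Q"
    using V Vn by (metis in_Mn_madj mm_resize)+
  have W': "mm n (madj W) W = Q" "mm n W (madj W) = R"
    using W Vn by (metis in_Mn_madj mm_resize)+
  have PP: "mm n P P = P" "mm n R R = R" using P R Vn is_proj_mm by blast+
  define U where "U = mm n W V"
  have "mm n (madj U) U = mm n (madj V) (mm n (mm n (madj W) W) V)"
    by (simp add: U_def madj_mm mm_assoc)
  also have "\<dots> = mm n (mm n (madj V) V) (mm n (madj V) V)"
    unfolding W'(1) V'(2)[symmetric] by (simp only: mm_assoc)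
  also have "\<dots> = P" using V' PP by simp
  finally have 1: "mm n (madj U) U = P" .
  have "mm n U (madj U) = mm n W (mm n (mm n V (madj V)) (madj W))"
    by (simp add: U_def madj_mm mm_assoc)
  also have "\<dots> = mm n (mm n W (madj W)) (mm n W (madj W))"
    unfolding V'(2) W'(1)[symmetric] by (simp only: mm_assoc)
  also have "\<dots> = R" using W' PP by simp
  finally have 2: "mm n U (madj U) = R" .
  have "in_Mn n U" unfolding U_def using Vn in_Mn_mm by blast
  then show ?thesis using 1 2 by (rule mvn_mmI)
qed

lemma mvn_sandwich:
  assumes P: "is_proj (P::'a::adjsr mat)" and Q: "is_proj Q" and PQ: "mvn P Q"
    and m: "in_Mn m P" "in_Mn m Q"
  shows "\<exists>V. in_Mn m V \<and> mm m (madj V) V = P \<and> mm m V (madj V) = Q"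
proof -
  obtain V n1 where V: "in_Mn n1 V" "mm n1 (madj V) V = P" "mm n1 V (madj V) = Q" using PQ by (rule mvn_mmE)
  define n where "n = max n1 m"
  have Vn: "in_Mn n V" "in_Mn n P" "in_Mn n Q"
    using V m by (auto simp: n_def intro: in_Mn_mono)
  have V': "mm n (madj V) V = P" "mm n V (madj V) = Q"
    using V Vn by (metis in_Mn_madj mm_resize)+
  have PP: "mm n P P = P" "mm n Q Q = Q" using P Q Vn is_proj_mm by blast+
  have aP: "madj P = P" "madj Q = Q" using P Q is_proj_adj by blast+
  define U where "U = mm n (mm n Q V) P"
  have Um: "in_Mn m U" unfolding U_def using m in_Mn_mm2 by blast
  have "mm n (madj U) U = mm n P (mm n (madj V) (mm n (mm n Q Q) (mm n V P)))"
    by (simp add: U_def madj_mm mm_assoc aP)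
  also have "\<dots> = mm n P (mm n (mm n (madj V) V) (mm n (mm n (madj V) V) (mm n (mm n (madj V) V) P)))"
    unfolding PP V'(2)[symmetric] by (simp only: mm_assoc)
  also have "\<dots> = P" unfolding V' by (simp only: PP)
  finally have 1: "mm n (madj U) U = P" .
  have "mm n U (madj U) = mm n Q (mm n V (mm n (mm n P P) (mm n (madj V) Q)))"
    by (simp add: U_def madj_mm mm_assoc aP)
  also have "\<dots> = mm n Q (mm n (mm n V (madj V)) (mm n (mm n V (madj V)) (mm n (mm n V (madj V)) Q)))"
    unfolding PP V'(1)[symmetric] by (simp only: mm_assoc)
  also have "\<dots> = Q" unfolding V' by (simp only: PP)
  finally have 2: "mm n U (madj U) = Q" .
  have "in_Mn n U" using Um n_def in_Mn_mono by (metis max.cobounded2)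
  then have "mm m (madj U) U = P" "mm m U (madj U) = Q"
    using 1 2 Um by (metis in_Mn_madj mm_resize)+
  then show ?thesis using Um by blast
qed



lemma in_Mn_dsum: "in_Mn n A \<Longrightarrow> in_Mn m B \<Longrightarrow> in_Mn (n+m) (dsum n A B)"
  by (auto simp: in_Mn_def dsum_def)

lemma in_Mn_dsum': "in_Mn m B \<Longrightarrow> in_Mn (n+m) (dsum n A B)"
  by (auto simp: in_Mn_def dsum_def)

lemma madj_dsum: "madj (dsum n A B :: 'a::adjsr mat) = dsum n (madj A) (madj B)"
  by (auto simp: madj_def dsum_def fun_eq_iff sr_adj_zero)

lemma mm_dsum:
  assumes "in_Mn n A" "in_Mn n A'" "in_Mn m B" "in_Mn m B'"
  shows "mm (n+m) (dsum n A B) (dsum n A' B') = dsum n (mm n A A') (mm m B B')"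
proof (intro ext)
  fix i j
  show "mm (n+m) (dsum n A B) (dsum n A' B') i j = dsum n (mm n A A') (mm m B B') i j"
    using assms unfolding mm_def sum_split_add
    by (cases "i < n"; cases "j < n") (simp_all add: dsum_def)
qed

lemma is_proj_dsum:
  assumes A: "is_proj (A::'a::adjsr mat)" and B: "is_proj B" and n: "in_Mn n A"
  shows "is_proj (dsum n A B)"
proof -
  obtain m where m: "in_Mn m B" using B is_proj_fin by blast
  show ?thesis
  proof (rule is_projI)
    show "in_Mn (n+m) (dsum n A B)" using m by (rule in_Mn_dsum')
    show "madj (dsum n A B) = dsum n A B" using A B by (simp add: madj_dsum is_proj_adj)
    show "mm (n+m) (dsum n A B) (dsum n A B) = dsum n A B"
      using A B n m by (simp add: mm_dsum is_proj_mm)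
  qed
qed

lemma mvn_dsum:
  assumes A: "is_proj (A::'a::adjsr mat)" "is_proj A'" and B: "is_proj B" "is_proj B'"
    and AA: "mvn A A'" and BB: "mvn B B'" and n: "in_Mn n A" "in_Mn n A'"
  shows "mvn (dsum n A B) (dsum n A' B')"
proof -
  obtain m1 where m1: "in_Mn m1 B" using B is_proj_fin by blast
  obtain m2 where m2: "in_Mn m2 B'" using B is_proj_fin by blast
  define m where "m = max m1 m2"
  have m: "in_Mn m B" "in_Mn m B'" using m1 m2 by (auto simp: m_def intro: in_Mn_mono)
  obtain V where V: "in_Mn n V" "mm n (madj V) V = A" "mm n V (madj V) = A'"
    using mvn_sandwich[OF A AA n] by blast
  obtain W where W: "in_Mn m W" "mm m (madj W) W = B" "mm m W (madj W) = B'"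
    using mvn_sandwich[OF B BB m] by blast
  show ?thesis
  proof (rule mvn_mmI)
    show "in_Mn (n+m) (dsum n V W)" using W(1) by (rule in_Mn_dsum')
    show "mm (n+m) (madj (dsum n V W)) (dsum n V W) = dsum n A B"
      using V W by (simp add: madj_dsum mm_dsum in_Mn_madj)
    show "mm (n+m) (dsum n V W) (madj (dsum n V W)) = dsum n A' B'"
      using V W by (simp add: madj_dsum mm_dsum in_Mn_madj)
  qed
qed

lemma dsum_zero_right: "in_Mn n A \<Longrightarrow> dsum n A 0 = A"
  by (auto simp: in_Mn_def dsum_def fun_eq_iff)

lemma dsum_0: "dsum 0 A B = B"
  by (simp add: dsum_def fun_eq_iff)

lemma dsum_assoc: "in_Mn n P \<Longrightarrow> in_Mn m R \<Longrightarrow> dsum n P (dsum m R R') = dsum (n+m) (dsum n P R) R'"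
  by (auto simp: in_Mn_def dsum_def fun_eq_iff)

lemma dsum_shift_eq: "in_Mn n P \<Longrightarrow> n \<le> n' \<Longrightarrow> dsum n' P R = dsum n P (dsum (n'-n) 0 R)"
  by (auto simp: in_Mn_def dsum_def fun_eq_iff)

lemma mvn_shift0:
  assumes R: "is_proj (R::'a::adjsr mat)"
  shows "mvn R (dsum d 0 R)"
proof -
  obtain m where m: "in_Mn m R" using R is_proj_fin by blast
  have RR: "mm m R R = R" "madj R = R" using R m is_proj_mm is_proj_adj by blast+
  have RR': "mm (d+m) R R = R" using R m in_Mn_mono is_proj_mm
    by (metis le_add2)
  define V where "V = (\<lambda>i j. if d \<le> i then R (i-d) j else 0)"
  have Vm: "in_Mn (d+m) V" using m by (auto simp: in_Mn_def V_def)
  show ?thesis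
  proof (rule mvn_mmI[OF Vm])
    show "mm (d+m) (madj V) V = R"
    proof (intro ext)
      fix i j
      have "mm (d+m) (madj V) V i j = (\<Sum>l<m. adj (R l i) * R l j)"
        unfolding mm_def sum_split_add by (simp add: V_def madj_def sr_adj_zero)
      also have "\<dots> = mm m (madj R) R i j" by (simp add: mm_def madj_def)
      finally show "mm (d+m) (madj V) V i j = R i j" using RR by simp
    qed
    show "mm (d+m) V (madj V) = dsum d 0 R"
    proof (intro ext)
      fix i j
      have "mm (d+m) V (madj V) i j = (if d \<le> i \<and> d \<le> j then mm (d+m) R (madj R) (i-d) (j-d) else 0)"
        by (cases "d \<le> i"; cases "d \<le> j") (simp_all add: mm_def V_def madj_def sr_adj_zero)
      then show "mm (d+m) V (madj V) i j = dsum d 0 R i j"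
        using RR RR' by (simp add: dsum_def)
    qed
  qed
qed

lemma mvn_dshift:
  assumes P: "is_proj (P::'a::adjsr mat)" and R: "is_proj R" and n: "in_Mn n P" "n \<le> n'"
  shows "mvn (dsum n P R) (dsum n' P R)"
proof -
  have "dsum n' P R = dsum n P (dsum (n'-n) 0 R)" using n by (rule dsum_shift_eq)
  moreover have "mvn (dsum n P R) (dsum n P (dsum (n'-n) 0 R))"
    using P R n by (intro mvn_dsum mvn_refl mvn_shift0 is_proj_dsum) simp_all
  ultimately show ?thesis by simp
qed



lemma elem_emat: "elem_mat a = emat 0 0 a"
  by (simp add: elem_mat_def emat_def)

lemma in_Mn_elem: "in_Mn 1 (elem_mat a)"
  by (auto simp: in_Mn_def elem_mat_def)

lemma elem_inj: "elem_mat a = elem_mat b \<longleftrightarrow> a = b"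
  by (metis elem_mat_def)

lemma madj_elem: "madj (elem_mat (a::'a::adjsr)) = elem_mat (adj a)"
  by (simp add: elem_emat madj_emat)

lemma mm_elem: "0 < N \<Longrightarrow> mm N (elem_mat a) (elem_mat b) = elem_mat (a * b)"
  by (simp add: elem_emat mm_emat_emat)

lemma is_proj_elem: "is_proj (elem_mat (a::'a::cstar_algebra)) \<longleftrightarrow> is_aproj a"
proof
  assume "is_proj (elem_mat a)"
  then have "madj (elem_mat a) = elem_mat a" "mm 1 (elem_mat a) (elem_mat a) = elem_mat a"
    using is_proj_adj is_proj_mm in_Mn_elem by blast+
  then show "is_aproj a" by (simp add: is_aproj_def madj_elem mm_elem elem_inj)
next
  assume "is_aproj a"
  then show "is_proj (elem_mat a)"
    by (intro is_projI[OF in_Mn_elem]) (simp_all add: is_aproj_def madj_elem mm_elem)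
qed

lemma sub_step:
  fixes a :: "'a::cstar_algebra"
  assumes a: "is_aproj a" and P: "is_proj P" and R: "is_proj R" and n: "in_Mn n P"
    and SE: "mvn (dsum n P R) (elem_mat a)"
  shows "\<exists>b. is_aproj b \<and> mvn P (elem_mat b) \<and> proj_le b a"
proof -
  obtain m where m: "in_Mn m R" using R is_proj_fin by blast
  define N where "N = n + m + 1"
  define S where "S = dsum n P R"
  define E where "E = elem_mat a"
  have S: "is_proj S" unfolding S_def using P R n by (rule is_proj_dsum)
  have E: "is_proj E" unfolding E_def using a is_proj_elem by blast
  have SN: "in_Mn N S" unfolding S_def N_def using in_Mn_dsum'[OF m] in_Mn_mono by (metis le_add1)
  have EN: "in_Mn N E" unfolding E_def N_def using in_Mn_elem in_Mn_mono by (metis le_add2)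
  have PN: "in_Mn N P" "in_Mn (n+m) P" using n in_Mn_mono unfolding N_def by (metis le_add1 add.assoc)+
  obtain W where W: "in_Mn N W" "mm N (madj W) W = S" "mm N W (madj W) = E"
    using mvn_sandwich[OF S E _ SN EN] SE S_def E_def by blast
  have aP: "madj P = P" using P is_proj_adj by blast
  have PP: "mm N P P = P" using P PN is_proj_mm by blast
  have "mm (n+m) P S = P" "mm (n+m) S P = P"
    using n m P R dsum_zero_right[OF n] mm_dsum[OF n n in_Mn_zero m] mm_dsum[OF n n m in_Mn_zero]
    unfolding S_def by (metis is_proj_mm mm_zero_left mm_zero_right)+
  then have PS: "mm N P S = P" "mm N S P = P"
    using PN SN S_def in_Mn_dsum'[OF m] by (metis mm_resize)+
  define Q where "Q = mm N (mm N W P) (madj W)"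
  have QE: "mm N Q E = Q"
  proof -
    have "mm N Q E = mm N W (mm N (mm N P (mm N (madj W) W)) (madj W))"
      unfolding Q_def W(3)[symmetric] by (simp only: mm_assoc)
    also have "\<dots> = Q" unfolding W(2) PS Q_def by (simp only: mm_assoc)
    finally show ?thesis .
  qed
  have EQ: "mm N E Q = Q"
  proof -
    have "mm N E Q = mm N W (mm N (mm N (mm N (madj W) W) P) (madj W))"
      unfolding Q_def W(3)[symmetric] by (simp only: mm_assoc)
    also have "\<dots> = Q" unfolding W(2) PS Q_def by (simp only: mm_assoc)
    finally show ?thesis .
  qed
  have QQ: "mm N Q Q = Q"
  proof -
    have "mm N Q Q = mm N W (mm N (mm N P (mm N (mm N (madj W) W) P)) (madj W))"
      unfolding Q_def by (simp only: mm_assoc)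
    also have "\<dots> = Q" unfolding W(2) PS PP Q_def by (simp only: mm_assoc)
    finally show ?thesis .
  qed
  have aQ: "madj Q = Q" unfolding Q_def by (simp add: madj_mm aP mm_assoc)
  have N0: "0 < N" by (simp add: N_def)
  define b where "b = Q 0 0"
  have Qb: "Q = elem_mat b"
  proof (intro ext)
    fix i j
    have 1: "i \<noteq> 0 \<Longrightarrow> Q i j = 0"
      using fun_cong[OF fun_cong[OF EQ, of i], of j] N0 by (simp add: E_def elem_emat mm_emat_left)
    have 2: "j \<noteq> 0 \<Longrightarrow> Q i j = 0"
      using fun_cong[OF fun_cong[OF QE, of i], of j] N0 by (simp add: E_def elem_emat mm_emat_right)
    show "Q i j = elem_mat b i j"
      using 1 2 by (auto simp add: elem_mat_def b_def)
  qed
  have ba: "b * a = b" "a * b = b"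
    using QE EQ N0 by (simp_all add: Qb E_def mm_elem elem_inj)
  have bproj: "is_aproj b"
    using QQ aQ N0 by (simp add: Qb is_aproj_def mm_elem madj_elem elem_inj)
  define U where "U = mm N W P"
  have UN: "in_Mn N U" unfolding U_def using W(1) PN(1) in_Mn_mm by blast
  have "mm N (madj U) U = P"
  proof -
    have "mm N (madj U) U = mm N P (mm N (mm N (madj W) W) P)"
      unfolding U_def by (simp add: madj_mm aP mm_assoc)
    also have "\<dots> = P" unfolding W(2) PS PP ..
    finally show ?thesis .
  qed
  moreover have "mm N U (madj U) = Q"
  proof -
    have "mm N U (madj U) = mm N W (mm N (mm N P P) (madj W))"
      unfolding U_def by (simp add: madj_mm aP mm_assoc)
    then show ?thesis unfolding PP Q_def by (simp add: mm_assoc)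
  qed
  ultimately have "mvn P (elem_mat b)" using UN Qb mvn_mmI by metis
  then show ?thesis using bproj ba by (auto simp: proj_le_def)
qed

lemma orth_sum:
  fixes b c :: "'a::cstar_algebra"
  assumes b: "is_aproj b" and c: "is_aproj c" and bc: "b * c = 0"
  shows "is_aproj (b + c) \<and> mvn (elem_mat (b + c)) (dsum 1 (elem_mat b) (elem_mat c))"
proof -
  have cb: "c * b = 0" using bc b c
    by (metis adj_mult adj_zero_cs is_aproj_def)
  have bb: "b * b = b" "adj b = b" "c * c = c" "adj c = c" using b c by (auto simp: is_aproj_def)
  have pr: "is_aproj (b + c)" using bb bc cb by (simp add: is_aproj_def algebra_simps adj_add)
  define V where "V = emat 0 0 b + emat 1 0 c"
  have V2: "in_Mn 2 V" unfolding V_def by (intro in_Mn_add in_Mn_emat) auto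
  have aV: "madj V = emat 0 0 b + emat 0 1 c" by (simp add: V_def madj_add madj_emat bb)
  have "mm 2 (madj V) V = elem_mat (b + c)"
    unfolding aV by (simp add: aV V_def mm_add_left mm_add_right mm_emat_emat bb emat_add elem_emat)
  moreover have "mm 2 V (madj V) = dsum 1 (elem_mat b) (elem_mat c)"
    unfolding aV by (simp add: aV V_def mm_add_left mm_add_right mm_emat_emat bb bc cb)
       (auto simp: emat_def dsum_def elem_mat_def fun_eq_iff)
  ultimately show ?thesis using pr V2 mvn_mmI by blast
qed



lemma is_proj_add_emat:
  fixes P :: "'b::adjsr mat"
  assumes P: "is_proj P" "in_Mn t P" and e: "e * e = e" "adj e = e"
  shows "is_proj (P + emat t t e)"
proof (rule is_projI)
  let ?N = "Suc t"
  have PN: "in_Mn ?N P" using P in_Mn_mono by (metis le_SucI order_refl)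
  show "in_Mn ?N (P + emat t t e)" using PN by (intro in_Mn_add in_Mn_emat) auto
  have z1: "mm ?N P (emat t t e) = 0"
    by (rule mm_emat_zcol) (use P in \<open>simp add: in_Mn_def\<close>)
  have z2: "mm ?N (emat t t e) P = 0"
    by (rule mm_emat_zrow) (use P in \<open>simp add: in_Mn_def\<close>)
  have PP: "mm ?N P P = P" using P PN is_proj_mm by blast
  show "madj (P + emat t t e) = P + emat t t e"
    using P e by (simp add: madj_add madj_emat is_proj_adj)
  show "mm ?N (P + emat t t e) (P + emat t t e) = P + emat t t e"
    by (simp add: mm_add_left mm_add_right z1 z2 PP mm_emat_emat e)
qed

lemma mvn_add_emat:
  fixes P :: "'b::adjsr mat"
  assumes P: "is_proj P" "in_Mn t P" and Q: "is_proj Q" "in_Mn t Q" and PQ: "mvn P Q"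
    and e: "e * e = e" "adj e = e"
  shows "mvn (P + emat t t e) (Q + emat t t e)"
proof -
  obtain V where V: "in_Mn t V" "mm t (madj V) V = P" "mm t V (madj V) = Q"
    using mvn_sandwich[OF P(1) Q(1) PQ P(2) Q(2)] by blast
  let ?N = "Suc t"
  have VN: "in_Mn ?N V" "in_Mn ?N (madj V)" using V(1) in_Mn_mono in_Mn_madj by (metis le_SucI order_refl)+
  have V': "mm ?N (madj V) V = P" "mm ?N V (madj V) = Q"
    using V VN in_Mn_madj mm_resize by metis+
  have z: "mm ?N V (emat t t e) = 0" "mm ?N (madj V) (emat t t e) = 0"
     "mm ?N (emat t t e) V = 0" "mm ?N (emat t t e) (madj V) = 0"
    using V(1) in_Mn_madj[OF V(1)]
    by (auto intro!: mm_emat_zcol mm_emat_zrow simp: in_Mn_def)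
  show ?thesis
  proof (rule mvn_mmI)
    show "in_Mn ?N (V + emat t t e)" using VN by (intro in_Mn_add in_Mn_emat) auto
    show "mm ?N (madj (V + emat t t e)) (V + emat t t e) = P + emat t t e"
      by (simp add: madj_add madj_emat e mm_add_left mm_add_right z V' mm_emat_emat)
    show "mm ?N (V + emat t t e) (madj (V + emat t t e)) = Q + emat t t e"
      by (simp add: madj_add madj_emat e mm_add_left mm_add_right z V' mm_emat_emat)
  qed
qed

lemma mvn_move:
  fixes S :: "'b::adjsr mat"
  assumes S: "is_proj S" "in_Mn t S" "\<And>j. S 0 j = 0" "\<And>i. S i 0 = 0" and t: "0 < t"
    and pu: "p * p = p" "u * u = u" "p * u = 0" "u * p = 0" "adj p = p" "adj u = u"
  shows "mvn (S + emat t t p + emat t t u) (emat 0 0 p + S + emat t t u)"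
proof -
  let ?N = "Suc t"
  define W where "W = emat 0 t p + emat t t u + S"
  have SN: "in_Mn ?N S" using S in_Mn_mono by (metis le_SucI order_refl)
  have SS: "mm ?N S S = S" using S SN is_proj_mm by blast
  have aS: "madj S = S" using S is_proj_adj by blast
  have z: "\<And>i a. mm ?N (emat i 0 a) S = 0" "\<And>i a. mm ?N (emat i t a) S = 0"
          "\<And>j a. mm ?N S (emat 0 j a) = 0" "\<And>j a. mm ?N S (emat t j a) = 0"
    using S by (auto intro!: mm_emat_zcol mm_emat_zrow simp: in_Mn_def)
  have aW: "madj W = emat t 0 p + emat t t u + S" by (simp add: W_def madj_add madj_emat aS pu)
  have tn: "t \<noteq> 0" using t by simp
  show ?thesis
  proof (rule mvn_mmI)
    show "in_Mn ?N W" unfolding W_def using SN by (intro in_Mn_add in_Mn_emat) auto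
    show "mm ?N (madj W) W = S + emat t t p + emat t t u"
      unfolding aW by (simp add: W_def mm_add_left mm_add_right z SS mm_emat_emat pu tn add_ac)
    show "mm ?N W (madj W) = emat 0 0 p + S + emat t t u"
      unfolding aW by (simp add: W_def mm_add_left mm_add_right z SS mm_emat_emat pu tn add_ac)
  qed
qed



lemma Uz_zero: "Uz 0 0 = (0::'a::cstar_algebra unitz)"
  by (simp add: zero_unitz_def)

lemma Uz_sum: "Uz (\<Sum>k\<in>S. f k) 0 = (\<Sum>k\<in>S. Uz (f k) (0::complex) :: 'a::cstar_algebra unitz)"
proof (induction S rule: infinite_finite_induct)
  case (insert x F)
  have "Uz (f x + sum f F) 0 = Uz (f x) 0 + (Uz (sum f F) 0 :: 'a unitz)" by simp
  then show ?case using insert by simp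
qed (simp_all add: Uz_zero)

lemma lift_mm: "lift_uz (mm N A B) = mm N (lift_uz A) (lift_uz (B::'a::cstar_algebra mat))"
  by (simp add: lift_uz_def mm_def fun_eq_iff Uz_sum)

lemma madj_lift: "madj (lift_uz (A::'a::cstar_algebra mat)) = lift_uz (madj A)"
  by (simp add: lift_uz_def madj_def fun_eq_iff)

lemma in_Mn_lift: "in_Mn n (A::'a::cstar_algebra mat) \<Longrightarrow> in_Mn n (lift_uz A)"
  by (simp add: in_Mn_def lift_uz_def Uz_zero)

lemma is_proj_lift: "is_proj (A::'a::cstar_algebra mat) \<Longrightarrow> is_proj (lift_uz A)"
proof -
  assume A: "is_proj A"
  then obtain n where n: "in_Mn n A" using is_proj_fin by blast
  show ?thesis
    by (rule is_projI[OF in_Mn_lift[OF n]])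
       (use A n in \<open>simp_all add: madj_lift is_proj_adj flip: lift_mm add: is_proj_mm\<close>)
qed

lemma in_Mn_unit: "in_Mn k (unit_uz k :: 'a::cstar_algebra unitz mat)"
  by (auto simp: in_Mn_def unit_uz_def)

lemma is_proj_unit: "is_proj (unit_uz k :: 'a::cstar_algebra unitz mat)"
proof (rule is_projI[OF in_Mn_unit])
  show "madj (unit_uz k) = (unit_uz k :: 'a unitz mat)"
    by (auto simp: madj_def unit_uz_def fun_eq_iff adj_zero_cs sr_adj_zero)
  have one: "Uz 0 1 * Uz 0 1 = (Uz 0 1 :: 'a unitz)" by simp
  show "mm k (unit_uz k) (unit_uz k) = (unit_uz k :: 'a unitz mat)"
  proof (intro ext)
    fix i j
    have "mm k (unit_uz k) (unit_uz k) i j = (\<Sum>l<k. if l = i then (if i = j \<and> i < k then Uz 0 1 else 0) else (0::'a unitz))"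
      unfolding mm_def by (intro sum.cong refl) (auto simp: unit_uz_def)
    also have "\<dots> = unit_uz k i j" by (simp add: sum_delta_lt unit_uz_def)
    finally show "mm k (unit_uz k) (unit_uz k) i j = (unit_uz k :: 'a unitz mat) i j" .
  qed
qed



lemma k0_cancel_uz:
  fixes x :: "'a::cstar_algebra"
  assumes x: "is_aproj x" and Y: "is_proj Y" and Z: "is_proj Z"
    and keq: "k0_eq (dsum 1 (elem_mat x) Y) (dsum 1 (elem_mat x) Z)"
  shows "k0_eq (dsum 1 0 Y) (dsum 1 0 Z)"
proof -
  obtain n k where inY: "in_Mn n (dsum 1 (elem_mat x) Y)" and inZ: "in_Mn n (dsum 1 (elem_mat x) Z)"
    and M: "mvn (dsum n (lift_uz (dsum 1 (elem_mat x) Y)) (unit_uz k))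
                 (dsum n (lift_uz (dsum 1 (elem_mat x) Z)) (unit_uz k))"
    using keq unfolding k0_eq_def by blast
  have inY': "in_Mn n (dsum 1 0 Y)" "in_Mn n (dsum 1 0 Z)"
    using inY inZ by (auto simp: in_Mn_def dsum_def split: if_splits)
  show ?thesis
  proof (cases "n = 0")
    case True
    then have "dsum 1 (elem_mat x) Y 0 0 = 0" using inY by (simp add: in_Mn_def)
    then have "x = 0" by (simp add: dsum_def elem_mat_def)
    then have "elem_mat x = 0" by (simp add: elem_mat_def fun_eq_iff)
    then show ?thesis using keq by simp
  next
    case False
    define t where "t = n + k"
    have t0: "0 < t" using False by (simp add: t_def)
    define p where "p = (Uz x 0 :: 'a unitz)"
    define u where "u = (Uz (- x) 1 :: 'a unitz)"
    have xx: "x * x = x" "adj x = x" using x by (auto simp: is_aproj_def)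
    have adjm: "adj (- x) = - x" using xx by (metis add.right_inverse adj_add adj_zero_cs add_eq_0_iff)
    have pu: "p * p = p" "u * u = u" "p * u = 0" "u * p = 0" "adj p = p" "adj u = u"
      by (simp_all add: p_def u_def xx adjm Uz_zero scaleC_one)
    have pu1: "p + u = Uz 0 1" by (simp add: p_def u_def)
    have Xp: "is_proj (elem_mat x)" using x is_proj_elem by blast
    have gen: "\<exists>S. is_proj (dsum n (lift_uz (dsum 1 (elem_mat x) W)) (unit_uz k)) \<and>
                   in_Mn t (dsum n (lift_uz (dsum 1 (elem_mat x) W)) (unit_uz k)) \<and>
                   dsum n (lift_uz (dsum 1 (elem_mat x) W)) (unit_uz k) = emat 0 0 p + S \<and>
                   dsum n (lift_uz (dsum 1 0 W)) (unit_uz (Suc k)) = S + emat t t p + emat t t u \<and>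
                   is_proj (dsum n (lift_uz (dsum 1 0 W)) (unit_uz (Suc k))) \<and>
                   mvn (S + emat t t p + emat t t u) (emat 0 0 p + S + emat t t u)"
      if W: "is_proj W" "in_Mn n (dsum 1 (elem_mat x) W)" "in_Mn n (dsum 1 0 W)" for W
    proof -
      define S where "S = dsum n (lift_uz (dsum 1 0 W)) (unit_uz k)"
      have S: "is_proj S" unfolding S_def
        by (intro is_proj_dsum is_proj_lift is_proj_unit in_Mn_lift W) simp_all
      have St: "in_Mn t S" unfolding S_def t_def by (intro in_Mn_dsum in_Mn_lift in_Mn_unit W)
      have S0: "\<And>j. S 0 j = 0" "\<And>i. S i 0 = 0" using False
        by (auto simp: S_def dsum_def lift_uz_def Uz_zero)
      have P1: "is_proj (dsum n (lift_uz (dsum 1 (elem_mat x) W)) (unit_uz k))"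
        by (intro is_proj_dsum is_proj_lift is_proj_unit in_Mn_lift W Xp in_Mn_elem)
      have P2: "in_Mn t (dsum n (lift_uz (dsum 1 (elem_mat x) W)) (unit_uz k))"
        unfolding t_def by (intro in_Mn_dsum in_Mn_lift in_Mn_unit W)
      have P3: "dsum n (lift_uz (dsum 1 (elem_mat x) W)) (unit_uz k) = emat 0 0 p + S"
        using False by (auto simp: S_def dsum_def lift_uz_def Uz_zero emat_def p_def elem_mat_def fun_eq_iff)
      have "dsum n (lift_uz (dsum 1 0 W)) (unit_uz (Suc k)) = S + emat t t (p + u)"
        unfolding pu1 by (auto simp: S_def dsum_def unit_uz_def emat_def t_def fun_eq_iff)
      then have P4: "dsum n (lift_uz (dsum 1 0 W)) (unit_uz (Suc k)) = S + emat t t p + emat t t u"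
        by (simp add: add.assoc emat_add)
      have P5: "is_proj (dsum n (lift_uz (dsum 1 0 W)) (unit_uz (Suc k)))"
        by (intro is_proj_dsum is_proj_lift is_proj_unit in_Mn_lift W) simp_all
      have P6: "mvn (S + emat t t p + emat t t u) (emat 0 0 p + S + emat t t u)"
        by (rule mvn_move[OF S St S0 t0 pu])
      show ?thesis using P1 P2 P3 P4 P5 P6 by blast
    qed
    obtain SY where SY: "is_proj (dsum n (lift_uz (dsum 1 (elem_mat x) Y)) (unit_uz k))"
                   "in_Mn t (dsum n (lift_uz (dsum 1 (elem_mat x) Y)) (unit_uz k))"
                   "dsum n (lift_uz (dsum 1 (elem_mat x) Y)) (unit_uz k) = emat 0 0 p + SY"
                   "dsum n (lift_uz (dsum 1 0 Y)) (unit_uz (Suc k)) = SY + emat t t p + emat t t u"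
                   "is_proj (dsum n (lift_uz (dsum 1 0 Y)) (unit_uz (Suc k)))"
                   "mvn (SY + emat t t p + emat t t u) (emat 0 0 p + SY + emat t t u)"
      using gen[OF Y inY inY'(1)] by blast
    obtain SZ where SZ: "is_proj (dsum n (lift_uz (dsum 1 (elem_mat x) Z)) (unit_uz k))"
                   "in_Mn t (dsum n (lift_uz (dsum 1 (elem_mat x) Z)) (unit_uz k))"
                   "dsum n (lift_uz (dsum 1 (elem_mat x) Z)) (unit_uz k) = emat 0 0 p + SZ"
                   "dsum n (lift_uz (dsum 1 0 Z)) (unit_uz (Suc k)) = SZ + emat t t p + emat t t u"
                   "is_proj (dsum n (lift_uz (dsum 1 0 Z)) (unit_uz (Suc k)))"
                   "mvn (SZ + emat t t p + emat t t u) (emat 0 0 p + SZ + emat t t u)"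
      using gen[OF Z inZ inY'(2)] by blast
    have mid: "mvn (emat 0 0 p + SY + emat t t u) (emat 0 0 p + SZ + emat t t u)"
      using mvn_add_emat[OF SY(1,2) SZ(1,2) M pu(2) pu(6)] SY(3) SZ(3) by simp
    have prZ: "is_proj (emat 0 0 p + SZ + emat t t u)"
      using is_proj_add_emat[OF SZ(1,2) pu(2) pu(6)] SZ(3) by simp
    have prY: "is_proj (SY + emat t t p + emat t t u)" using SY(4,5) by simp
    have prZ': "is_proj (SZ + emat t t p + emat t t u)" using SZ(4,5) by simp
    have "mvn (SY + emat t t p + emat t t u) (emat 0 0 p + SZ + emat t t u)"
      by (rule mvn_trans[OF prY prZ SY(6) mid])
    then have "mvn (SY + emat t t p + emat t t u) (SZ + emat t t p + emat t t u)"
      by (rule mvn_trans[OF prY prZ' _ mvn_sym[OF SZ(6)]])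
    then have "mvn (dsum n (lift_uz (dsum 1 0 Y)) (unit_uz (Suc k))) (dsum n (lift_uz (dsum 1 0 Z)) (unit_uz (Suc k)))"
      using SY(4) SZ(4) by simp
    then show ?thesis unfolding k0_eq_def using inY' by blast
  qed
qed



definition peq :: "'a::adjsr mat \<Rightarrow> 'a mat \<Rightarrow> bool" where
  "peq P Q \<longleftrightarrow> is_proj P \<and> is_proj Q \<and> mvn P Q"

lemma peq_refl: "is_proj P \<Longrightarrow> peq P P"
  by (simp add: peq_def mvn_refl)

lemma peq_sym: "peq P Q \<Longrightarrow> peq Q P"
  by (auto simp: peq_def intro: mvn_sym)

lemma peq_trans: "peq P Q \<Longrightarrow> peq Q R \<Longrightarrow> peq P R"
  by (auto simp: peq_def intro: mvn_trans)

lemma peq_projD: "peq P Q \<Longrightarrow> is_proj P" "peq P Q \<Longrightarrow> is_proj Q"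
  by (auto simp: peq_def)

lemma peq_dsum: "peq A A' \<Longrightarrow> peq B B' \<Longrightarrow> in_Mn n A \<Longrightarrow> in_Mn n A' \<Longrightarrow> peq (dsum n A B) (dsum n A' B')"
  by (auto simp: peq_def intro: mvn_dsum is_proj_dsum)

lemma peq_dshift: "is_proj P \<Longrightarrow> is_proj R \<Longrightarrow> in_Mn n P \<Longrightarrow> n \<le> n' \<Longrightarrow> peq (dsum n P R) (dsum n' P R)"
  unfolding peq_def using mvn_dshift is_proj_dsum in_Mn_mono by metis

lemma peq_reassoc:
  assumes PP: "peq P' (dsum n P R)" and P: "is_proj P" "in_Mn n P" and P': "in_Mn n' P'"
    and R: "is_proj R" and R': "is_proj R'"
  shows "\<exists>m'. in_Mn m' R \<and> peq (dsum n' P' R') (dsum n P (dsum m' R R'))"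
proof -
  obtain m where m: "in_Mn m R" using R is_proj_fin by blast
  define L where "L = max n' (n + m)"
  have P'p: "is_proj P'" using PP peq_projD by blast
  have 1: "peq (dsum n' P' R') (dsum L P' R')"
    using P'p R' P' by (intro peq_dshift) (auto simp: L_def)
  have 2: "peq (dsum L P' R') (dsum L (dsum n P R) R')"
    using PP R' P' in_Mn_dsum[OF P(2) m]
    by (intro peq_dsum peq_refl) (auto simp: L_def intro: in_Mn_mono)
  have mL: "in_Mn (L - n) R" using m by (rule in_Mn_mono) (auto simp: L_def)
  have 3: "dsum L (dsum n P R) R' = dsum n P (dsum (L - n) R R')"
    using dsum_assoc[OF P(2) mL, of R'] by (simp add: L_def)
  show ?thesis using 1 2 3 mL peq_trans by metis
qed

context
  fixes TA :: "'a::cstar_algebra itself"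
  assumes canc: "has_cancellation TYPE('a)"
begin

lemma keq_mvn: "is_proj (P::'a mat) \<Longrightarrow> is_proj Q \<Longrightarrow> k0_eq P Q \<longleftrightarrow> mvn P Q"
  using canc unfolding has_cancellation_def by blast

lemma cls_eq: "is_proj (P::'a mat) \<Longrightarrow> is_proj Q \<Longrightarrow> k0cls P = k0cls Q \<longleftrightarrow> peq P Q"
proof
  assume P: "is_proj P" and Q: "is_proj Q" and e: "k0cls P = k0cls Q"
  have "Q \<in> k0cls Q" using Q by (simp add: k0cls_def keq_mvn mvn_refl)
  then have "Q \<in> k0cls P" using e by simp
  then have "k0_eq P Q" by (simp add: k0cls_def)
  then show "peq P Q" using P Q keq_mvn peq_def by blast
next
  assume P: "is_proj P" and Q: "is_proj Q" and e: "peq P Q"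
  show "k0cls P = k0cls Q"
    unfolding k0cls_def using P Q e keq_mvn
    by (auto simp: peq_def) (meson mvn_trans mvn_sym)+
qed

lemma kc:
  assumes x: "is_aproj (x::'a)" and Y: "is_proj Y" and Z: "is_proj Z"
    and e: "peq (dsum 1 (elem_mat x) Y) (dsum 1 (elem_mat x) Z)"
  shows "peq Y Z"
proof -
  have Xp: "is_proj (elem_mat x)" using x is_proj_elem by blast
  have "k0_eq (dsum 1 (elem_mat x) Y) (dsum 1 (elem_mat x) Z)"
    using e keq_mvn peq_def by blast
  then have "k0_eq (dsum 1 0 Y) (dsum 1 0 Z)" using k0_cancel_uz x Y Z by blast
  moreover have "is_proj (dsum 1 0 Y)" "is_proj (dsum 1 0 Z)"
    using Y Z by (auto intro: is_proj_dsum)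
  ultimately have "peq (dsum 1 0 Y) (dsum 1 0 Z)" using keq_mvn peq_def by blast
  moreover have "peq Y (dsum 1 0 Y)" "peq Z (dsum 1 0 Z)"
    using Y Z by (auto simp: peq_def intro: mvn_shift0 is_proj_dsum)
  ultimately show ?thesis by (meson peq_sym peq_trans)
qed

end

lemma mvn_zero_proj: "mvn 0 (Q::'a::adjsr mat) \<Longrightarrow> is_proj Q \<Longrightarrow> Q = 0"
proof -
  assume m: "mvn 0 Q" and Q: "is_proj Q"
  obtain V n where V: "in_Mn n V" "mm n (madj V) V = 0" "mm n V (madj V) = Q" using m by (rule mvn_mmE)
  have "in_Mn n Q" using V in_Mn_mm in_Mn_madj by metis
  then have "Q = mm n Q Q" using Q is_proj_mm by metis
  also have "\<dots> = mm n V (mm n (mm n (madj V) V) (madj V))" by (simp add: V(3)[symmetric] mm_assoc)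
  also have "\<dots> = 0" by (simp add: V(2))
  finally show ?thesis .
qed

lemma proj_le_diff:
  fixes a b :: "'a::cstar_algebra"
  assumes a: "is_aproj a" and b: "is_aproj b" and ba: "proj_le b a"
  shows "is_aproj (a - b) \<and> b * (a - b) = 0 \<and> a = b + (a - b)"
proof -
  have h: "a * a = a" "b * b = b" "b * a = b" "a * b = b" "adj a = a" "adj b = b"
    using a b ba by (auto simp: is_aproj_def proj_le_def)
  have "adj (a - b) = a - b" using h by (metis adj_add add_diff_cancel diff_add_cancel)
  moreover have "(a - b) * (a - b) = a - b" using h by (simp add: algebra_simps)
  ultimately show ?thesis using h by (simp add: is_aproj_def algebra_simps)
qed

lemma eq_lemma:
  fixes a b :: "'a::cstar_algebra"
  assumes canc: "has_cancellation TYPE('a)"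
    and a: "is_aproj a" and b: "is_aproj b" and ba: "proj_le b a" and e: "peq (elem_mat b) (elem_mat a)"
  shows "b = a"
proof -
  define d where "d = a - b"
  have d: "is_aproj d" "b * d = 0" "a = b + d" using proj_le_diff[OF a b ba] d_def by auto
  have "peq (elem_mat a) (dsum 1 (elem_mat b) (elem_mat d))"
    using orth_sum[OF b d(1) d(2)] d(3) e is_proj_dsum[OF _ _ in_Mn_elem] is_proj_elem d(1) b
    by (auto simp: peq_def)
  then have "peq (dsum 1 (elem_mat b) 0) (dsum 1 (elem_mat b) (elem_mat d))"
    using e dsum_zero_right[OF in_Mn_elem] peq_trans by metis
  then have "peq 0 (elem_mat d)" using kc[OF canc b is_proj_zero, of "elem_mat d"] d(1) is_proj_elem by blast
  then have "elem_mat d = 0" using mvn_zero_proj peq_def by blast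
  then have "elem_mat d 0 0 = 0" by simp
  then have "d = 0" by (simp add: elem_mat_def)
  then show ?thesis using d(3) by simp
qed



lemma k0_le_refl: "is_proj P \<Longrightarrow> k0_le (k0cls P) (k0cls P)"
proof -
  assume P: "is_proj P"
  then obtain n where n: "in_Mn n P" using is_proj_fin by blast
  show ?thesis unfolding k0_le_def
    using P n dsum_zero_right[OF n] is_proj_zero by metis
qed

lemma k0_le_zero: "g \<in> K0pos \<Longrightarrow> k0_le (k0cls (elem_mat (0::'a::cstar_algebra))) g"
proof -
  assume "g \<in> K0pos"
  then obtain R :: "'a mat" where R: "is_proj R" "g = k0cls R" by (auto simp: K0pos_def)
  have "elem_mat (0::'a) = 0" by (simp add: elem_mat_def fun_eq_iff)
  then show ?thesis unfolding k0_le_def using R dsum_0[of 0 R] is_proj_zero in_Mn_zero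
    by metis
qed

context
  fixes TA :: "'a::cstar_algebra itself"
  assumes canc: "has_cancellation TYPE('a)"
begin

lemma k0_le_trans:
  assumes gh: "k0_le g h" and hl: "k0_le h (l::'a mat set)"
  shows "k0_le g l"
proof -
  obtain P R n where P: "is_proj P" "is_proj R" "in_Mn n P" "g = k0cls P" "h = k0cls (dsum n P R)"
    using gh unfolding k0_le_def by blast
  obtain P' R' n' where P': "is_proj P'" "is_proj R'" "in_Mn n' P'" "h = k0cls P'" "l = k0cls (dsum n' P' R')"
    using hl unfolding k0_le_def by blast
  have "peq P' (dsum n P R)" using P P' cls_eq[OF canc] is_proj_dsum by metis
  then obtain m' where m': "in_Mn m' R" "peq (dsum n' P' R') (dsum n P (dsum m' R R'))"
    using peq_reassoc P P' by metis
  have "l = k0cls (dsum n P (dsum m' R R'))"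
    using m'(2) P'(5) cls_eq[OF canc] peq_projD by metis
  moreover have "is_proj (dsum m' R R')" using m' P P' is_proj_dsum by blast
  ultimately show ?thesis unfolding k0_le_def using P by blast
qed

lemma rel_step:
  fixes a b :: 'a
  assumes a: "is_aproj a" and b: "is_aproj b" and ba: "proj_le b a"
    and l1: "k0_le (k0cls (elem_mat b)) g" and l2: "k0_le g (k0cls (elem_mat a))"
  shows "\<exists>c. is_aproj c \<and> proj_le b c \<and> proj_le c a \<and> k0cls (elem_mat c) = g"
proof -
  obtain P R n where P: "is_proj P" and R: "is_proj R" and nP: "in_Mn n P"
    and e1: "k0cls (elem_mat b) = k0cls P" and g1: "g = k0cls (dsum n P R)"
    using l1 unfolding k0_le_def by blast
  obtain P' R' n' where P': "is_proj P'" and R': "is_proj R'" and nP': "in_Mn n' P'"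
    and g2: "g = k0cls P'" and e2: "k0cls (elem_mat a) = k0cls (dsum n' P' R')"
    using l2 unfolding k0_le_def by blast
  have Bp: "is_proj (elem_mat b)" and Ap: "is_proj (elem_mat a)" using a b is_proj_elem by blast+
  have PR: "is_proj (dsum n P R)" using P R nP by (rule is_proj_dsum)
  have bP: "peq (elem_mat b) P" using e1 cls_eq[OF canc Bp P] by blast
  have PP': "peq P' (dsum n P R)" using g1 g2 cls_eq[OF canc P' PR] by simp
  have aS: "peq (elem_mat a) (dsum n' P' R')"
    using e2 cls_eq[OF canc Ap] is_proj_dsum[OF P' R' nP'] by blast
  obtain m' where mR: "in_Mn m' R" and r: "peq (dsum n' P' R') (dsum n P (dsum m' R R'))"
    using peq_reassoc[OF PP' P nP nP' R R'] by blast
  define Y where "Y = dsum m' R R'"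
  have Yp: "is_proj Y" unfolding Y_def using R R' mR by (rule is_proj_dsum)
  define n1 where "n1 = max n 1"
  have n1: "in_Mn n1 P" "in_Mn n1 (elem_mat b)" "n \<le> n1" "1 \<le> n1"
    using nP in_Mn_elem in_Mn_mono unfolding n1_def by (metis max.cobounded1 max.cobounded2)+
  have c1: "peq (dsum n P Y) (dsum n1 P Y)" using P Yp nP n1 by (intro peq_dshift)
  have c2: "peq (dsum n1 P Y) (dsum n1 (elem_mat b) Y)"
    using peq_dsum[OF peq_sym[OF bP] peq_refl[OF Yp]] n1 by blast
  have c3: "peq (dsum 1 (elem_mat b) Y) (dsum n1 (elem_mat b) Y)"
    using Bp Yp in_Mn_elem n1 by (intro peq_dshift)
  have aY: "peq (elem_mat a) (dsum 1 (elem_mat b) Y)"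
    using aS r c1 c2 c3 unfolding Y_def[symmetric] by (meson peq_sym peq_trans)
  define d where "d = a - b"
  have d: "is_aproj d" "b * d = 0" "a = b + d" using proj_le_diff[OF a b ba] d_def by auto
  have Dp: "is_proj (elem_mat d)" using d is_proj_elem by blast
  have ad: "peq (elem_mat a) (dsum 1 (elem_mat b) (elem_mat d))"
    using orth_sum[OF b d(1) d(2)] d(3) Ap is_proj_dsum[OF Bp Dp in_Mn_elem] by (simp add: peq_def)
  have "peq (dsum 1 (elem_mat b) (elem_mat d)) (dsum 1 (elem_mat b) Y)"
    using ad aY by (meson peq_sym peq_trans)
  then have dY: "peq (elem_mat d) Y" using kc[OF canc b Dp Yp] by blast
  obtain c0 where c0: "is_aproj c0" "mvn R (elem_mat c0)" "proj_le c0 d"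
    using sub_step[OF d(1) R R' mR] dY unfolding Y_def peq_def by (meson mvn_sym)
  have C0p: "is_proj (elem_mat c0)" using c0 is_proj_elem by blast
  have h: "b * b = b" "adj b = b" "c0 * c0 = c0" "adj c0 = c0" "c0 * d = c0" "d * c0 = c0"
          "d * d = d" "adj d = d"
    using b c0 d by (auto simp: is_aproj_def proj_le_def)
  have bc0: "b * c0 = 0" using h d(2) by (metis mult.assoc mult_zero_left)
  have c0b: "c0 * b = 0" using bc0 h by (metis adj_mult adj_zero_cs)
  have db: "d * b = 0" using d(2) h by (metis adj_mult adj_zero_cs)
  define c where "c = b + c0"
  have oc: "is_aproj c \<and> mvn (elem_mat c) (dsum 1 (elem_mat b) (elem_mat c0))"
    unfolding c_def by (rule orth_sum[OF b c0(1) bc0])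
  have le1: "proj_le b c" using h bc0 c0b by (simp add: proj_le_def c_def algebra_simps)
  have le2: "proj_le c a" using h bc0 c0b db d(2) by (simp add: proj_le_def c_def d(3) algebra_simps)
  have Cp: "is_proj (elem_mat c)" using oc is_proj_elem by blast
  have s1: "peq (elem_mat c) (dsum 1 (elem_mat b) (elem_mat c0))"
    using oc Cp is_proj_dsum[OF Bp C0p in_Mn_elem] by (simp add: peq_def)
  have s2: "peq (dsum 1 (elem_mat b) (elem_mat c0)) (dsum 1 (elem_mat b) R)"
    using Bp C0p R c0(2) in_Mn_elem by (intro peq_dsum peq_refl) (auto simp: peq_def intro: mvn_sym)
  have s3: "peq (dsum 1 (elem_mat b) R) (dsum n1 (elem_mat b) R)"
    using Bp R in_Mn_elem n1 by (intro peq_dshift)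
  have s4: "peq (dsum n1 (elem_mat b) R) (dsum n1 P R)"
    using bP R n1 by (intro peq_dsum peq_refl)
  have s5: "peq (dsum n P R) (dsum n1 P R)" using P R nP n1 by (intro peq_dshift)
  have "peq (elem_mat c) (dsum n P R)" using s1 s2 s3 s4 s5 by (meson peq_sym peq_trans)
  then have "k0cls (elem_mat c) = g" using g1 cls_eq[OF canc Cp PR] by simp
  then show ?thesis using oc le1 le2 by blast
qed

lemma chain_le:
  assumes steps: "\<forall>j. lo \<le> j \<and> j < hi \<longrightarrow> k0_le (g j) (g (Suc j))"
    and glo: "g lo = k0cls (elem_mat (b::'a))" and b: "is_aproj b"
  shows "\<forall>j. lo \<le> j \<and> j \<le> hi \<longrightarrow> k0_le (g lo) (g j)"
proof (intro allI impI)
  fix j assume j: "lo \<le> j \<and> j \<le> hi"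
  then have "lo \<le> j" "j \<le> hi" by auto
  then show "k0_le (g lo) (g j)"
  proof (induction j rule: dec_induct)
    case base then show ?case using glo b is_proj_elem k0_le_refl by metis
  next
    case (step j)
    have 1: "k0_le (g j) (g (Suc j))" using steps step by simp
    have 2: "k0_le (g lo) (g j)" using step.IH step.prems by simp
    show ?case using k0_le_trans[OF 2 1] .
  qed
qed

lemma chain:
  assumes steps: "\<forall>j. lo \<le> j \<and> j < hi \<longrightarrow> k0_le (g j) (g (Suc j))" and lohi: "lo \<le> hi"
    and a: "is_aproj a" and b: "is_aproj (b::'a)" and ba: "proj_le b a"
    and glo: "g lo = k0cls (elem_mat b)" and ghi: "g hi = k0cls (elem_mat a)"
  shows "\<exists>q. q lo = b \<and> q hi = a \<and> (\<forall>j. lo \<le> j \<and> j \<le> hi \<longrightarrow> is_aproj (q j) \<and> k0cls (elem_mat (q j)) = g j)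
            \<and> (\<forall>j. lo \<le> j \<and> j < hi \<longrightarrow> proj_le (q j) (q (Suc j)))"
  using lohi a ba ghi steps
proof (induction hi arbitrary: a)
  case 0
  then have "lo = 0" by simp
  have Bp: "is_proj (elem_mat b)" "is_proj (elem_mat a)" using b 0(2) is_proj_elem by blast+
  have "peq (elem_mat b) (elem_mat a)" using cls_eq[OF canc Bp] glo 0(4) \<open>lo = 0\<close> by simp
  then have "b = a" using eq_lemma[OF canc 0(2) b 0(3)] by blast
  then show ?case using \<open>lo = 0\<close> b glo by (intro exI[of _ "\<lambda>_. b"]) auto
next
  case (Suc h)
  show ?case
  proof (cases "lo = Suc h")
    case True
    have Bp: "is_proj (elem_mat b)" "is_proj (elem_mat a)" using b Suc(3) is_proj_elem by blast+
    have "peq (elem_mat b) (elem_mat a)" using cls_eq[OF canc Bp] glo Suc(5) True by simp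
    then have "b = a" using eq_lemma[OF canc Suc(3) b Suc(4)] by blast
    then show ?thesis using True b glo by (intro exI[of _ "\<lambda>_. b"]) auto
  next
    case False
    then have lh: "lo \<le> h" using Suc(2) by simp
    have k1: "k0_le (k0cls (elem_mat b)) (g h)" using chain_le[OF Suc(6) glo b] lh glo by simp
    have "k0_le (g h) (g (Suc h))" using Suc(6) lh by blast
    then have k2: "k0_le (g h) (k0cls (elem_mat a))" using Suc(5) by simp
    obtain c where c: "is_aproj c" "proj_le b c" "proj_le c a" "k0cls (elem_mat c) = g h"
      using rel_step[OF Suc(3) b Suc(4) k1 k2] by blast
    have st: "\<forall>j. lo \<le> j \<and> j < h \<longrightarrow> k0_le (g j) (g (Suc j))" using Suc(6) by simp
    obtain q where q: "q lo = b" "q h = c"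
      "\<forall>j. lo \<le> j \<and> j \<le> h \<longrightarrow> is_aproj (q j) \<and> k0cls (elem_mat (q j)) = g j"
      "\<forall>j. lo \<le> j \<and> j < h \<longrightarrow> proj_le (q j) (q (Suc j))"
      using Suc.IH[OF lh c(1) c(2) c(4)[symmetric] st] by blast
    define q' where "q' = q(Suc h := a)"
    have "q' lo = b" using q False by (simp add: q'_def)
    moreover have "q' (Suc h) = a" by (simp add: q'_def)
    moreover have "\<forall>j. lo \<le> j \<and> j \<le> Suc h \<longrightarrow> is_aproj (q' j) \<and> k0cls (elem_mat (q' j)) = g j"
      using q(3) Suc(3) Suc(5) by (auto simp: q'_def le_Suc_eq)
    moreover have "\<forall>j. lo \<le> j \<and> j < Suc h \<longrightarrow> proj_le (q' j) (q' (Suc j))"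
      using q(2) q(4) c(3) by (auto simp: q'_def less_Suc_eq)
    ultimately show ?thesis by blast
  qed
qed

end



lemma mono_upto:
  assumes "\<forall>n<N. m n \<le> m (Suc n)" shows "\<forall>n\<le>N. (m n::nat) \<le> m N"
  using assms
proof (induction N)
  case 0 then show ?case by simp
next
  case (Suc N)
  then have "\<forall>n\<le>N. m n \<le> m N" by simp
  moreover have "m N \<le> m (Suc N)" using Suc.prems by simp
  ultimately show ?case by (metis le_Suc_eq order_trans order_refl)
qed

lemma gen:
  fixes p :: "nat \<Rightarrow> 'a::cstar_algebra"
  assumes canc: "has_cancellation TYPE('a)"
  shows "p 0 = 0 \<Longrightarrow> m 0 = 0 \<Longrightarrow> g 0 = k0cls (elem_mat 0) \<Longrightarrow>
    (\<forall>n\<le>N. is_aproj (p n)) \<Longrightarrow> (\<forall>n<N. proj_le (p n) (p (Suc n))) \<Longrightarrow>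
    (\<forall>n<N. m n \<le> m (Suc n)) \<Longrightarrow> (\<forall>k<m N. k0_le (g k) (g (Suc k))) \<Longrightarrow>
    (\<forall>n\<le>N. g (m n) = k0cls (elem_mat (p n))) \<Longrightarrow>
    \<exists>q. (\<forall>k\<le>m N. is_aproj (q k) \<and> k0cls (elem_mat (q k)) = g k) \<and>
        (\<forall>k<m N. proj_le (q k) (q (Suc k))) \<and> (\<forall>n\<le>N. p n = q (m n))"
proof (induction N)
  case 0
  have "is_aproj (0::'a)" by (simp add: is_aproj_def adj_zero_cs)
  then show ?case using 0 by (intro exI[of _ "\<lambda>_. 0"]) auto
next
  case (Suc N)
  have mle: "m N \<le> m (Suc N)" using Suc.prems(6) by simp
  obtain q where q: "\<forall>k\<le>m N. is_aproj (q k) \<and> k0cls (elem_mat (q k)) = g k"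
      "\<forall>k<m N. proj_le (q k) (q (Suc k))" "\<forall>n\<le>N. p n = q (m n)"
    using Suc.IH Suc.prems mle by (smt (verit) le_SucI less_SucI order_less_le_trans)
  have st: "\<forall>j. m N \<le> j \<and> j < m (Suc N) \<longrightarrow> k0_le (g j) (g (Suc j))" using Suc.prems(7) by simp
  obtain q2 where q2: "q2 (m N) = p N" "q2 (m (Suc N)) = p (Suc N)"
      "\<forall>j. m N \<le> j \<and> j \<le> m (Suc N) \<longrightarrow> is_aproj (q2 j) \<and> k0cls (elem_mat (q2 j)) = g j"
      "\<forall>j. m N \<le> j \<and> j < m (Suc N) \<longrightarrow> proj_le (q2 j) (q2 (Suc j))"
    using chain[OF canc st mle, of "p (Suc N)" "p N"] Suc.prems by auto
  define q' where "q' = (\<lambda>k. if k \<le> m N then q k else q2 k)"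
  have A: "\<forall>k\<le>m (Suc N). is_aproj (q' k) \<and> k0cls (elem_mat (q' k)) = g k"
    using q(1) q2(3) by (auto simp: q'_def)
  have B: "\<forall>k<m (Suc N). proj_le (q' k) (q' (Suc k))"
  proof (intro allI impI)
    fix k assume k: "k < m (Suc N)"
    consider "Suc k \<le> m N" | "k = m N" | "m N < k" by linarith
    then show "proj_le (q' k) (q' (Suc k))"
    proof cases
      case 1 then show ?thesis using q(2) by (simp add: q'_def)
    next
      case 2
      have "proj_le (q2 (m N)) (q2 (Suc (m N)))" using q2(4) k 2 by simp
      moreover have "q2 (m N) = q (m N)" using q(3) q2(1) by simp
      ultimately show ?thesis using 2 by (simp add: q'_def)
    next
      case 3 then show ?thesis using q2(4) k by (simp add: q'_def)
    qed
  qed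
  have mN: "\<forall>n\<le>N. m n \<le> m N" using mono_upto Suc.prems(6) by simp
  have C: "\<forall>n\<le>Suc N. p n = q' (m n)"
  proof (intro allI impI)
    fix n assume n: "n \<le> Suc N"
    show "p n = q' (m n)"
    proof (cases "n \<le> N")
      case True then show ?thesis using q(3) mN by (simp add: q'_def)
    next
      case False
      then have nN: "n = Suc N" using n by simp
      show ?thesis
      proof (cases "m (Suc N) \<le> m N")
        case True
        then have "m (Suc N) = m N" using mle by simp
        then show ?thesis using nN q2(1) q2(2) q(3) by (simp add: q'_def)
      next
        case False then show ?thesis using nN q2(2) by (simp add: q'_def)
      qed
    qed
  qed
  show ?case using A B C by blast
qed

lemma part2:
  fixes p :: "nat \<Rightarrow> 'a::cstar_algebra"
  assumes canc: "has_cancellation TYPE('a)"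
    and h: "1 \<le> N"
       "\<forall>n\<in>{1..N}. is_aproj (p n)"
       "\<forall>n. 1 \<le> n \<and> n < N \<longrightarrow> proj_le (p n) (p (Suc n))"
       "\<forall>k\<in>{1..M}. g k \<in> K0pos"
       "\<forall>k. 1 \<le> k \<and> k < M \<longrightarrow> k0_le (g k) (g (Suc k))"
       "\<forall>n\<in>{1..N}. 1 \<le> m n \<and> m n \<le> M"
       "\<forall>n. 1 \<le> n \<and> n < N \<longrightarrow> m n \<le> m (Suc n)"
       "\<forall>n\<in>{1..N}. g (m n) = k0cls (elem_mat (p n))"
       "m N = M"
  shows "\<exists>q :: nat \<Rightarrow> 'a.
            (\<forall>k\<in>{1..M}. is_aproj (q k) \<and> k0cls (elem_mat (q k)) = g k) \<and>
            (\<forall>k. 1 \<le> k \<and> k < M \<longrightarrow> proj_le (q k) (q (Suc k))) \<and>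
            (\<forall>n\<in>{1..N}. p n = q (m n))"
proof -
  define p' where "p' = p(0 := 0)"
  define m' where "m' = m(0 := 0)"
  define g' where "g' = g(0 := k0cls (elem_mat (0::'a)))"
  have M1: "1 \<le> M" using h(1) h(6) by auto
  have z: "is_aproj (0::'a)" by (simp add: is_aproj_def adj_zero_cs)
  have "\<exists>q. (\<forall>k\<le>m' N. is_aproj (q k) \<and> k0cls (elem_mat (q k)) = g' k) \<and>
        (\<forall>k<m' N. proj_le (q k) (q (Suc k))) \<and> (\<forall>n\<le>N. p' n = q (m' n))"
  proof (rule gen[OF canc])
    show "p' 0 = 0" "m' 0 = 0" "g' 0 = k0cls (elem_mat 0)" by (simp_all add: p'_def m'_def g'_def)
    show "\<forall>n\<le>N. is_aproj (p' n)" using h(2) z by (auto simp: p'_def)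
    show "\<forall>n<N. proj_le (p' n) (p' (Suc n))"
      using h(3) by (auto simp: p'_def proj_le_def)
    show "\<forall>n<N. m' n \<le> m' (Suc n)"
      using h(7) by (auto simp: m'_def)
    show "\<forall>k<m' N. k0_le (g' k) (g' (Suc k))"
    proof (intro allI impI)
      fix k assume k: "k < m' N"
      then have kM: "k < M" using h(1) h(9) by (simp add: m'_def)
      show "k0_le (g' k) (g' (Suc k))"
      proof (cases "k = 0")
        case True
        have "g 1 \<in> K0pos" using h(4) M1 by simp
        then show ?thesis using k0_le_zero True by (simp add: g'_def)
      next
        case False then show ?thesis using h(5) kM by (simp add: g'_def)
      qed
    qed
    show "\<forall>n\<le>N. g' (m' n) = k0cls (elem_mat (p' n))"
    proof (intro allI impI)
      fix n assume n: "n \<le> N"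
      show "g' (m' n) = k0cls (elem_mat (p' n))"
      proof (cases "n = 0")
        case True then show ?thesis by (simp add: g'_def m'_def p'_def)
      next
        case False
        then have "n \<in> {1..N}" using n by simp
        then have "1 \<le> m n" "g (m n) = k0cls (elem_mat (p n))" using h(6) h(8) by auto
        then show ?thesis using False by (simp add: g'_def m'_def p'_def)
      qed
    qed
  qed
  then obtain q where q: "\<forall>k\<le>m' N. is_aproj (q k) \<and> k0cls (elem_mat (q k)) = g' k"
        "\<forall>k<m' N. proj_le (q k) (q (Suc k))" "\<forall>n\<le>N. p' n = q (m' n)" by blast
  have mN: "m' N = M" using h(1) h(9) by (simp add: m'_def)
  show ?thesis
    using q mN by (intro exI[of _ q]) (auto simp: g'_def p'_def m'_def)
qed

theorem lemma2p3:
  fixes A :: "'a::cstar_algebra itself"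
  assumes canc: "has_cancellation A"
  shows
   "(\<forall>(p::'a) (g :: nat \<Rightarrow> 'a mat set) (N::nat).
       is_aproj p \<and> 1 \<le> N \<and> (\<forall>n\<in>{1..N}. g n \<in> K0pos) \<and>
       (\<forall>n. 1 \<le> n \<and> n < N \<longrightarrow> k0_le (g n) (g (Suc n))) \<and>
       g N = k0cls (elem_mat p)
     \<longrightarrow> (\<exists>ps :: nat \<Rightarrow> 'a.
            (\<forall>n\<in>{1..N}. is_aproj (ps n) \<and> k0cls (elem_mat (ps n)) = g n) \<and>
            (\<forall>n. 1 \<le> n \<and> n < N \<longrightarrow> proj_le (ps n) (ps (Suc n))) \<and>
            ps N = p))
  \<and>
   (\<forall>(p :: nat \<Rightarrow> 'a) (N::nat) (g :: nat \<Rightarrow> 'a mat set) (M::nat) (m :: nat \<Rightarrow> nat).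
       1 \<le> N \<and>
       (\<forall>n\<in>{1..N}. is_aproj (p n)) \<and>
       (\<forall>n. 1 \<le> n \<and> n < N \<longrightarrow> proj_le (p n) (p (Suc n))) \<and>
       (\<forall>k\<in>{1..M}. g k \<in> K0pos) \<and>
       (\<forall>k. 1 \<le> k \<and> k < M \<longrightarrow> k0_le (g k) (g (Suc k))) \<and>
       (\<forall>n\<in>{1..N}. 1 \<le> m n \<and> m n \<le> M) \<and>
       (\<forall>n. 1 \<le> n \<and> n < N \<longrightarrow> m n \<le> m (Suc n)) \<and>
       (\<forall>n\<in>{1..N}. g (m n) = k0cls (elem_mat (p n))) \<and>
       m N = M
     \<longrightarrow> (\<exists>q :: nat \<Rightarrow> 'a.
            (\<forall>k\<in>{1..M}. is_aproj (q k) \<and> k0cls (elem_mat (q k)) = g k) \<and>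
            (\<forall>k. 1 \<le> k \<and> k < M \<longrightarrow> proj_le (q k) (q (Suc k))) \<and>
            (\<forall>n\<in>{1..N}. p n = q (m n))))"
  proof -
  have canc': "has_cancellation TYPE('a)" using canc by (simp add: has_cancellation_def)
  show ?thesis
  proof (intro conjI allI impI)
    fix p :: 'a and g :: "nat \<Rightarrow> 'a mat set" and N :: nat
    assume H: "is_aproj p \<and> 1 \<le> N \<and> (\<forall>n\<in>{1..N}. g n \<in> K0pos) \<and>
       (\<forall>n. 1 \<le> n \<and> n < N \<longrightarrow> k0_le (g n) (g (Suc n))) \<and>
       g N = k0cls (elem_mat p)"
    have "\<exists>q :: nat \<Rightarrow> 'a. (\<forall>k\<in>{1..N}. is_aproj (q k) \<and> k0cls (elem_mat (q k)) = g k) \<and>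
            (\<forall>k. 1 \<le> k \<and> k < N \<longrightarrow> proj_le (q k) (q (Suc k))) \<and>
            (\<forall>n\<in>{1..1::nat}. (\<lambda>_. p) n = q ((\<lambda>_. N) n))"
      by (rule part2[OF canc']) (use H in auto)
    then show "\<exists>ps :: nat \<Rightarrow> 'a.
            (\<forall>n\<in>{1..N}. is_aproj (ps n) \<and> k0cls (elem_mat (ps n)) = g n) \<and>
            (\<forall>n. 1 \<le> n \<and> n < N \<longrightarrow> proj_le (ps n) (ps (Suc n))) \<and>
            ps N = p" by auto
  next
    fix p :: "nat \<Rightarrow> 'a" and N :: nat and g :: "nat \<Rightarrow> 'a mat set" and M :: nat and m :: "nat \<Rightarrow> nat"
    assume H: "1 \<le> N \<and>
       (\<forall>n\<in>{1..N}. is_aproj (p n)) \<and>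
       (\<forall>n. 1 \<le> n \<and> n < N \<longrightarrow> proj_le (p n) (p (Suc n))) \<and>
       (\<forall>k\<in>{1..M}. g k \<in> K0pos) \<and>
       (\<forall>k. 1 \<le> k \<and> k < M \<longrightarrow> k0_le (g k) (g (Suc k))) \<and>
       (\<forall>n\<in>{1..N}. 1 \<le> m n \<and> m n \<le> M) \<and>
       (\<forall>n. 1 \<le> n \<and> n < N \<longrightarrow> m n \<le> m (Suc n)) \<and>
       (\<forall>n\<in>{1..N}. g (m n) = k0cls (elem_mat (p n))) \<and>
       m N = M"
    show "\<exists>q :: nat \<Rightarrow> 'a.
            (\<forall>k\<in>{1..M}. is_aproj (q k) \<and> k0cls (elem_mat (q k)) = g k) \<and>
            (\<forall>k. 1 \<le> k \<and> k < M \<longrightarrow> proj_le (q k) (q (Suc k))) \<and>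
            (\<forall>n\<in>{1..N}. p n = q (m n))"
      by (rule part2[OF canc']) (use H in auto)
  qed
qed

end
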